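(* If $d$ is a squarefree integer such that $H^d(\mathbb{Q})\neq\emptyset$, then $H^d(\mathbb{Q})$ is infinite.
   Context: $H^d$ denotes the genus one curve $d y^2=(x^2-x-3)(x^2+2x-12)$ (smooth projective model). *)

theory Defs
  imports Complex_Main "HOL-Computational_Algebra.Squarefree"
begin

text \<open>Homogenised quartic: F(X,Z) = Z^4 f(X/Z) with f(x) = (x^2-x-3)(x^2+2x-12).\<close>
definition quarticF :: "rat \<Rightarrow> rat \<Rightarrow> rat" where
  "quarticF X Z = (X^2 - X*Z - 3*Z^2) * (X^2 + 2*X*Z - 12*Z^2)"

text \<open>Smooth projective model of d y^2 = f(x) in the weighted projective plane P(1,2,1):
  nonzero rational triples (X,Y,Z) with d Y^2 = F(X,Z), modulo (X,Y,Z) ~ (l X, l^2 Y, l Z).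
  Affine points (x,y) correspond to (x,y,1); Z = 0 gives the points at infinity.\<close>
definition H_cone :: "int \<Rightarrow> (rat \<times> rat \<times> rat) set" where
  "H_cone d = {(X,Y,Z). (X,Y,Z) \<noteq> (0,0,0) \<and> of_int d * Y^2 = quarticF X Z}"

definition wproj_rel :: "((rat \<times> rat \<times> rat) \<times> (rat \<times> rat \<times> rat)) set" where
  "wproj_rel = {((X,Y,Z),(X',Y',Z')). \<exists>l::rat. l \<noteq> 0 \<and> X' = l*X \<and> Y' = l^2*Y \<and> Z' = l*Z}"

definition H_rat_points :: "int \<Rightarrow> (rat \<times> rat \<times> rat) set set" where
  "H_rat_points d = H_cone d // wproj_rel"

end

theory Submission
  imports Defs
begin

definition Nh :: "'a::comm_ring_1 \<Rightarrow> 'a \<Rightarrow> 'a" where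
  "Nh X Z = -62208*Z^9 + 66096*X*Z^8 + 25920*X^2*Z^7 - 56736*X^3*Z^6 + 19008*X^4*Z^5 + 3240*X^5*Z^4 - 2544*X^6*Z^3 + 72*X^7*Z^2 + 144*X^8*Z - 21*X^9"

definition Dh :: "'a::comm_ring_1 \<Rightarrow> 'a \<Rightarrow> 'a" where
  "Dh X Z = -27216*Z^9 + 31104*X*Z^8 + 2592*X^2*Z^7 - 15264*X^3*Z^6 + 3240*X^4*Z^5 + 3168*X^5*Z^4 - 1576*X^6*Z^3 + 120*X^7*Z^2 + 51*X^8*Z - 8*X^9"

definition Sh :: "'a::comm_ring_1 \<Rightarrow> 'a \<Rightarrow> 'a" where
  "Sh X Z = 45349632*Z^16 - 362797056*X*Z^15 + 806215680*X^2*Z^14 - 924908544*X^3*Z^13 + 641426688*X^4*Z^12 - 225566208*X^5*Z^11 - 54577152*X^6*Z^10 + 119155968*X^7*Z^9 - 69223392*X^8*Z^8 + 19859328*X^9*Z^7 - 1516032*X^10*Z^6 - 1044288*X^11*Z^5 + 494928*X^12*Z^4 - 118944*X^13*Z^3 + 17280*X^14*Z^2 - 1296*X^15*Z + 27*X^16"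

definition Ah :: "'a::comm_ring_1 \<Rightarrow> 'a \<Rightarrow> 'a" where
  "Ah X Z = -465567768*Z^8 + 294542352*X*Z^7 + 197440236*X^2*Z^6 - 161032484*X^3*Z^5 - 28193874*X^4*Z^4 + 40201260*X^5*Z^3 - 6121303*X^6*Z^2 - 1183335*X^7*Z + 260520*X^8"

definition Bh :: "'a::comm_ring_1 \<Rightarrow> 'a \<Rightarrow> 'a" where
  "Bh X Z = 1064103552*Z^8 - 587785896*X*Z^7 - 749784816*X^2*Z^6 + 588961812*X^3*Z^5 - 19747548*X^4*Z^4 - 67104702*X^5*Z^3 + 8759436*X^6*Z^2 + 3435975*X^7*Z - 683865*X^8"

definition Ah2 :: "'a::comm_ring_1 \<Rightarrow> 'a \<Rightarrow> 'a" where
  "Ah2 X Z = -7976601360*Z^8 + 6679535400*X*Z^7 + 2838057264*X^2*Z^6 - 3623653908*X^3*Z^5 - 177727932*X^4*Z^4 + 883442718*X^5*Z^3 - 187446204*X^6*Z^2 - 24491079*X^7*Z + 7389608*X^8"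

definition Bh2 :: "'a::comm_ring_1 \<Rightarrow> 'a \<Rightarrow> 'a" where
  "Bh2 X Z = 18232231680*Z^8 - 13802419440*X*Z^7 - 11899813032*X^2*Z^6 + 13025208240*X^3*Z^5 - 1522469196*X^4*Z^4 - 1449292356*X^5*Z^3 + 296160354*X^6*Z^2 + 73635588*X^7*Z - 19398657*X^8"

definition NL :: "int list" where "NL = [-62208, 66096, 25920, -56736, 19008, 3240, -2544, 72, 144, -21]"
definition DL :: "int list" where "DL = [-27216, 31104, 2592, -15264, 3240, 3168, -1576, 120, 51, -8]"
definition NR :: "int list" where "NR = [-21, 144, 72, -2544, 3240, 19008, -56736, 25920, 66096, -62208]"
definition DR :: "int list" where "DR = [-8, 51, 120, -1576, 3168, 3240, -15264, 2592, 31104, -27216]"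

lemma idF: "quarticF (Nh X Z) (Dh X Z) = (Sh X Z)^2 * quarticF X Z"
  unfolding quarticF_def Nh_def Dh_def Sh_def by algebra

lemma idA: "Ah X Z * Nh X Z + Bh X Z * Dh X Z = (1397440512::int) * Z^17"
  unfolding Ah_def Bh_def Nh_def Dh_def by algebra

lemma idB: "Ah2 X Z * Nh X Z + Bh2 X Z * Dh X Z = (7488::int) * X^17"
  unfolding Ah2_def Bh2_def Nh_def Dh_def by algebra

lemma Nh_hom: "Nh (l*X) (l*Z) = (l::real)^9 * Nh X Z"
  unfolding Nh_def by algebra
lemma Dh_hom: "Dh (l*X) (l*Z) = (l::real)^9 * Dh X Z"
  unfolding Dh_def by algebra
lemma Nh_neg: "Nh (-X) (-Z) = - Nh X (Z::int)"
  unfolding Nh_def by algebra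
lemma Dh_neg: "Dh (-X) (-Z) = - Dh X (Z::int)"
  unfolding Dh_def by algebra
lemma of_int_Nh: "of_int (Nh p q) = Nh (of_int p) (of_int q)"
  unfolding Nh_def by simp
lemma of_int_Dh: "of_int (Dh p q) = Dh (of_int p) (of_int q)"
  unfolding Dh_def by simp
lemma of_int_Sh: "of_int (Sh p q) = Sh (of_int p) (of_int q)"
  unfolding Sh_def by simp

fun ev :: "int list \<Rightarrow> real \<Rightarrow> real" where
  "ev [] x = 0"
| "ev (c#cs) x = of_int c + x * ev cs x"

lemma chartNL: "Nh t 1 = ev NL t" unfolding Nh_def NL_def by simp algebra
lemma chartDL: "Dh t 1 = ev DL t" unfolding Dh_def DL_def by simp algebra
lemma chartNR: "Nh 1 t = ev NR t" unfolding Nh_def NR_def by simp algebra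
lemma chartDR: "Dh 1 t = ev DR t" unfolding Dh_def DR_def by simp algebra

fun lo :: "int list \<Rightarrow> int" where
  "lo [] = 0"
| "lo (c#cs) = c + min 0 (lo cs)"

lemma lo_le: "0 \<le> u \<Longrightarrow> u \<le> 1 \<Longrightarrow> of_int (lo cs) \<le> ev cs u"
proof (induction cs)
  case Nil then show ?case by simp
next
  case (Cons c cs)
  have IH: "of_int (lo cs) \<le> ev cs u" using Cons by simp
  have "of_int (min 0 (lo cs)) \<le> u * ev cs u"
  proof (cases "lo cs \<ge> 0")
    case True
    then have "0 \<le> ev cs u" using IH by linarith
    then show ?thesis using True Cons.prems by simp
  next
    case False
    then have lo0: "of_int (lo cs) < (0::real)" by simp
    have "u * of_int (lo cs) \<le> u * ev cs u" using IH Cons.prems by (simp add: mult_left_mono)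
    moreover have "of_int (lo cs) \<le> u * of_int (lo cs)"
    proof -
      have "(1 - u) * of_int (lo cs) \<le> 0" using lo0 Cons.prems by (simp add: mult_nonneg_nonpos)
      then show ?thesis by (simp add: algebra_simps)
    qed
    ultimately have "of_int (lo cs) \<le> u * ev cs u" by linarith
    then show ?thesis using False by simp
  qed
  then show ?case by simp
qed

fun padd :: "int list \<Rightarrow> int list \<Rightarrow> int list" where
  "padd [] ys = ys"
| "padd xs [] = xs"
| "padd (x#xs) (y#ys) = (x+y) # padd xs ys"

lemma ev_padd: "ev (padd xs ys) u = ev xs u + ev ys u"
  by (induction xs ys rule: padd.induct) (auto simp: algebra_simps)

lemma ev_map_mult: "ev (map ((*) k) cs) u = of_int k * ev cs u"
  by (induction cs) (auto simp: algebra_simps)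

definition lin :: "int \<Rightarrow> int list \<Rightarrow> int list" where
  "lin k cs = padd (map ((*) k) cs) (0 # cs)"

lemma ev_lin: "ev (lin k cs) u = (of_int k + u) * ev cs u"
  unfolding lin_def by (simp add: ev_padd ev_map_mult algebra_simps)

fun shift :: "int \<Rightarrow> int list \<Rightarrow> int list" where
  "shift k [] = []"
| "shift k (c#cs) = padd [c] (lin k (shift k cs))"

lemma ev_shift: "ev (shift k cs) u = ev cs (of_int k + u)"
  by (induction cs) (simp_all add: ev_padd ev_lin)

fun scl :: "int \<Rightarrow> int list \<Rightarrow> int list" where
  "scl M [] = []"
| "scl M (c#cs) = (c * M ^ length cs) # scl M cs"

lemma ev_scl: "M \<noteq> 0 \<Longrightarrow> of_int M * ev (scl M cs) s = of_int M ^ length cs * ev cs (s / of_int M)"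
proof (induction cs)
  case Nil then show ?case by simp
next
  case (Cons c cs)
  have "of_int M * ev (scl M (c#cs)) s = of_int M * of_int c * of_int M ^ length cs + s * (of_int M * ev (scl M cs) s)"
    by (simp add: algebra_simps)
  also have "\<dots> = of_int M * of_int c * of_int M ^ length cs + s * (of_int M ^ length cs * ev cs (s / of_int M))"
    using Cons by simp
  also have "\<dots> = of_int M ^ length (c#cs) * ev (c#cs) (s / of_int M)"
    using Cons.prems by (simp add: field_simps)
  finally show ?case .
qed

definition okk :: "int list \<Rightarrow> int \<Rightarrow> int \<Rightarrow> bool" where
  "okk P M k = (M ^ 9 \<le> 100 * lo (shift k (scl M P)))"

lemma okk_bound:
  assumes "okk P M k" "length P = 10" "M > 0" "of_int k \<le> t * of_int M" "t * of_int M \<le> of_int k + 1"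
  shows "1/100 \<le> ev P t"
proof -
  define u where "u = t * of_int M - of_int k"
  have u: "0 \<le> u" "u \<le> 1" using assms unfolding u_def by auto
  have "of_int (lo (shift k (scl M P))) \<le> ev (shift k (scl M P)) u" by (rule lo_le[OF u])
  also have "\<dots> = ev (scl M P) (t * of_int M)" by (simp add: ev_shift u_def)
  finally have 1: "of_int (lo (shift k (scl M P))) \<le> ev (scl M P) (t * of_int M)" .
  have "of_int M * ev (scl M P) (t * of_int M) = of_int M ^ 10 * ev P t"
    using ev_scl[of M P "t * of_int M"] assms by simp
  then have 2: "ev (scl M P) (t * of_int M) = of_int M ^ 9 * ev P t"
    using assms(3) by (simp add: power_Suc[of _ 9, simplified])
  have 3: "real_of_int (M^9) \<le> 100 * of_int (lo (shift k (scl M P)))"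
    using assms(1) unfolding okk_def by (metis of_int_le_iff of_int_mult of_int_numeral)
  have "of_int M ^ 9 \<le> 100 * (of_int M ^ 9 * ev P t)" using 1 2 3 by simp
  moreover have "(0::real) < of_int M ^ 9" using assms(3) by simp
  ultimately have "of_int M ^ 9 * 1 \<le> of_int M ^ 9 * (100 * ev P t)" by (simp add: algebra_simps)
  then have "1 \<le> 100 * ev P t" using \<open>(0::real) < of_int M ^ 9\<close> by (simp only: mult_le_cancel_left_pos)
  then show ?thesis by simp
qed

definition okc :: "int list \<Rightarrow> int list \<Rightarrow> int \<Rightarrow> bool" where
  "okc P Q k = (okk P 64 k \<or> okk (map ((*) (-1)) P) 64 k \<or> okk Q 64 k \<or> okk (map ((*) (-1)) Q) 64 k)"

lemma chkR: "list_all (okc NR DR) [-64..63]"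
  by code_simp
lemma chkL: "list_all (okc NL DL) [-64..63]"
  by code_simp

lemma cover:
  assumes chk: "list_all (okc P Q) [-64..63]" and len: "length P = 10" "length Q = 10"
    and t: "-1 \<le> t" "t \<le> 1"
  shows "1/100 \<le> max \<bar>ev P t\<bar> \<bar>ev Q t\<bar>"
proof -
  define k where "k = (if t = 1 then 63 else \<lfloor>t * 64\<rfloor>)"
  have kb: "of_int k \<le> t * of_int 64" "t * of_int 64 \<le> of_int k + 1"
    unfolding k_def using t by (auto simp: of_int_floor_le)
  have kr0: "-64 \<le> k \<and> k \<le> 63"
    unfolding k_def using t by (auto simp: floor_le_iff le_floor_iff)
  have kr: "k \<in> set [-64..63]" by (simp only: set_upto) (use kr0 in simp)
  have "\<forall>k\<in>set [-64..63]. okc P Q k" using chk by (simp only: list_all_iff)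
  then have "okc P Q k" using kr by blast
  then show ?thesis unfolding okc_def
  proof (elim disjE)
    assume "okk P 64 k" then have "1/100 \<le> ev P t" using okk_bound[OF _ len(1) _ kb] by simp
    then show ?thesis by linarith
  next
    assume "okk (map ((*) (-1)) P) 64 k" then have "1/100 \<le> ev (map ((*) (-1)) P) t"
      using okk_bound[OF _ _ _ kb] len by simp
    then show ?thesis by (simp add: ev_map_mult)
  next
    assume "okk Q 64 k" then have "1/100 \<le> ev Q t" using okk_bound[OF _ len(2) _ kb] by simp
    then show ?thesis by linarith
  next
    assume "okk (map ((*) (-1)) Q) 64 k" then have "1/100 \<le> ev (map ((*) (-1)) Q) t"
      using okk_bound[OF _ _ _ kb] len by simp
    then show ?thesis by (simp add: ev_map_mult)
  qed
qed

lemma anal_real: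
  fixes x z :: real
  shows "(max \<bar>x\<bar> \<bar>z\<bar>)^9 \<le> 100 * max \<bar>Nh x z\<bar> \<bar>Dh x z\<bar>"
proof (cases "\<bar>z\<bar> \<le> \<bar>x\<bar>")
  case True
  show ?thesis
  proof (cases "x = 0")
    case True
    then have "z = 0" using \<open>\<bar>z\<bar> \<le> \<bar>x\<bar>\<close> by simp
    then show ?thesis using True by (simp add: Nh_def Dh_def)
  next
    case False
    define t where "t = z / x"
    have t: "-1 \<le> t" "t \<le> 1" using True False unfolding t_def
      by (auto simp: abs_le_iff divide_le_eq le_divide_eq split: if_splits)
    have zx: "z = x * t" using False unfolding t_def by simp
    have c: "1/100 \<le> max \<bar>ev NR t\<bar> \<bar>ev DR t\<bar>"
      by (rule cover[OF chkR _ _ t]) (simp_all add: NR_def DR_def)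
    have "Nh x z = x^9 * ev NR t" using Nh_hom[of x 1 t] by (simp add: zx chartNR)
    moreover have "Dh x z = x^9 * ev DR t" using Dh_hom[of x 1 t] by (simp add: zx chartDR)
    ultimately have "max \<bar>Nh x z\<bar> \<bar>Dh x z\<bar> = \<bar>x\<bar>^9 * max \<bar>ev NR t\<bar> \<bar>ev DR t\<bar>"
      by (simp add: abs_mult power_abs max_mult_distrib_left)
    moreover have "\<bar>x\<bar>^9 * (1/100) \<le> \<bar>x\<bar>^9 * max \<bar>ev NR t\<bar> \<bar>ev DR t\<bar>"
      using c by (intro mult_left_mono) auto
    ultimately show ?thesis using True by simp
  qed
next
  case False
  then have z0: "z \<noteq> 0" by auto
  define t where "t = x / z"
  have t: "-1 \<le> t" "t \<le> 1" using False z0 unfolding t_def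
    by (auto simp: abs_le_iff divide_le_eq le_divide_eq split: if_splits)
  have xz: "x = z * t" using z0 unfolding t_def by simp
  have c: "1/100 \<le> max \<bar>ev NL t\<bar> \<bar>ev DL t\<bar>"
    by (rule cover[OF chkL _ _ t]) (simp_all add: NL_def DL_def)
  have "Nh x z = z^9 * ev NL t" using Nh_hom[of z t 1] by (simp add: xz chartNL)
  moreover have "Dh x z = z^9 * ev DL t" using Dh_hom[of z t 1] by (simp add: xz chartDL)
  ultimately have "max \<bar>Nh x z\<bar> \<bar>Dh x z\<bar> = \<bar>z\<bar>^9 * max \<bar>ev NL t\<bar> \<bar>ev DL t\<bar>"
    by (simp add: abs_mult power_abs max_mult_distrib_left)
  moreover have "\<bar>z\<bar>^9 * (1/100) \<le> \<bar>z\<bar>^9 * max \<bar>ev NL t\<bar> \<bar>ev DL t\<bar>"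
    using c by (intro mult_left_mono) auto
  ultimately show ?thesis using False by simp
qed

lemma anal_int:
  fixes p q :: int
  shows "(max \<bar>p\<bar> \<bar>q\<bar>)^9 \<le> 100 * max \<bar>Nh p q\<bar> \<bar>Dh p q\<bar>"
proof -
  have "real_of_int ((max \<bar>p\<bar> \<bar>q\<bar>)^9) \<le> real_of_int (100 * max \<bar>Nh p q\<bar> \<bar>Dh p q\<bar>)"
    using anal_real[of "of_int p" "of_int q"] by (simp add: of_int_Nh of_int_Dh of_int_max)
  then show ?thesis by (simp only: of_int_le_iff)
qed

lemma gcd_bound:
  fixes p q :: int
  assumes "coprime p q"
  shows "gcd (Nh p q) (Dh p q) dvd 1397440512"
proof -
  let ?g = "gcd (Nh p q) (Dh p q)"
  have "?g dvd Ah p q * Nh p q + Bh p q * Dh p q" by simp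
  then have 1: "?g dvd 1397440512 * q^17" by (simp only: idA)
  have "?g dvd Ah2 p q * Nh p q + Bh2 p q * Dh p q" by simp
  then have "?g dvd 7488 * p^17" by (simp only: idB)
  then have 2: "?g dvd 1397440512 * p^17"
    using dvd_mult2[of ?g "7488 * p^17" 186624] by (simp add: algebra_simps)
  have "?g dvd gcd (1397440512 * q^17) (1397440512 * p^17)" using 1 2 by simp
  also have "\<dots> = 1397440512 * gcd (q^17) (p^17)"
    by (simp add: gcd_mult_distrib_int[symmetric])
  also have "gcd (q^17) (p^17) = 1" using assms
    by (simp add: coprime_commute)
  finally show ?thesis by simp
qed

fun hv :: "int list \<Rightarrow> int \<Rightarrow> int \<Rightarrow> int \<times> int" where
  "hv [] p q = (0, 1)"
| "hv (c#cs) p q = (case hv cs p q of (v, w) \<Rightarrow> (c * w + p * v, q * w))"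

lemma hvN: "fst (hv NL p q) = Nh p q" unfolding NL_def Nh_def by simp algebra
lemma hvD: "fst (hv DL p q) = Dh p q" unfolding DL_def Dh_def by simp algebra

definition good3 :: "int \<Rightarrow> int \<Rightarrow> bool" where
 "good3 p q = (if gcd p q \<noteq> 1 then True else
   (let n = fst (hv NL p q); d = fst (hv DL p q) in gcd (gcd 1397440512 n) d * max \<bar>p\<bar> \<bar>q\<bar> < max \<bar>n\<bar> \<bar>d\<bar>))"

lemma chk_small: "list_all (\<lambda>p. list_all (\<lambda>q. good3 p q) [0..25]) [-25..25]"
  by code_simp

lemma small0:
  fixes p q :: int
  assumes "coprime p q" "max \<bar>p\<bar> \<bar>q\<bar> \<le> 25" "0 \<le> q"
  shows "gcd (Nh p q) (Dh p q) * max \<bar>p\<bar> \<bar>q\<bar> < max \<bar>Nh p q\<bar> \<bar>Dh p q\<bar>"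
proof -
  have "\<forall>p\<in>set [-25..25]. \<forall>q\<in>set [0..25]. good3 p q" using chk_small by (simp only: list_all_iff)
  moreover have "p \<in> set [-25..25]" by (simp only: set_upto) (use assms in auto)
  moreover have "q \<in> set [0..25]" by (simp only: set_upto) (use assms in auto)
  ultimately have "good3 p q" by blast
  then have 1: "gcd (gcd 1397440512 (Nh p q)) (Dh p q) * max \<bar>p\<bar> \<bar>q\<bar> < max \<bar>Nh p q\<bar> \<bar>Dh p q\<bar>"
    using assms(1) unfolding good3_def by (simp add: Let_def coprime_iff_gcd_eq_1 hvN hvD)
  have "gcd (gcd 1397440512 (Nh p q)) (Dh p q) = gcd 1397440512 (gcd (Nh p q) (Dh p q))"
    by (simp add: gcd.assoc)
  also have "\<dots> = gcd (Nh p q) (Dh p q)"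
    using gcd_bound[OF assms(1)] by (simp add: gcd_proj2_if_dvd)
  finally show ?thesis using 1 by simp
qed

lemma small:
  fixes p q :: int
  assumes "coprime p q" "max \<bar>p\<bar> \<bar>q\<bar> \<le> 25"
  shows "gcd (Nh p q) (Dh p q) * max \<bar>p\<bar> \<bar>q\<bar> < max \<bar>Nh p q\<bar> \<bar>Dh p q\<bar>"
proof (cases "0 \<le> q")
  case True then show ?thesis using small0 assms by blast
next
  case False
  have "gcd (Nh (-p) (-q)) (Dh (-p) (-q)) * max \<bar>-p\<bar> \<bar>-q\<bar> < max \<bar>Nh (-p) (-q)\<bar> \<bar>Dh (-p) (-q)\<bar>"
    using False assms by (intro small0) auto
  then show ?thesis by (simp add: Nh_neg Dh_neg)
qed

lemma hgrow:
  fixes p q :: int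
  assumes "coprime p q"
  shows "gcd (Nh p q) (Dh p q) * max \<bar>p\<bar> \<bar>q\<bar> < max \<bar>Nh p q\<bar> \<bar>Dh p q\<bar>"
proof (cases "max \<bar>p\<bar> \<bar>q\<bar> \<le> 25")
  case True then show ?thesis using small assms by blast
next
  case False
  define H where "H = max \<bar>p\<bar> \<bar>q\<bar>"
  define g where "g = gcd (Nh p q) (Dh p q)"
  have H26: "26 \<le> H" using False unfolding H_def by linarith
  have "g \<le> 1397440512" unfolding g_def using gcd_bound[OF assms] by (rule zdvd_imp_le) simp
  moreover have "0 \<le> g" unfolding g_def by simp
  ultimately have "g * H \<le> 1397440512 * H" using H26 by (intro mult_right_mono) auto
  moreover have "(26::int)^8 \<le> H^8" using H26 by (intro power_mono) auto
  then have "100 * 1397440512 < H^8" by simp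
  then have "100 * 1397440512 * H < H^8 * H" using H26 by (intro mult_strict_right_mono) auto
  moreover have "H^8 * H = H^9" by (simp add: power_Suc[of _ 8, simplified] mult.commute)
  moreover have "H^9 \<le> 100 * max \<bar>Nh p q\<bar> \<bar>Dh p q\<bar>" unfolding H_def by (rule anal_int)
  ultimately have "100 * (g * H) < 100 * max \<bar>Nh p q\<bar> \<bar>Dh p q\<bar>" by linarith
  then show ?thesis unfolding g_def H_def by simp
qed

lemma quarticF_mult: "quarticF (l * a) (l * b) = l^4 * quarticF a b"
  unfolding quarticF_def by algebra

lemma quarticF_scale: "quarticF (a / g) (b / g) = quarticF a b / g^4"
proof -
  have "quarticF (a / g) (b / g) = quarticF ((1/g) * a) ((1/g) * b)" by simp
  also have "\<dots> = (1/g)^4 * quarticF a b" by (rule quarticF_mult)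
  finally show ?thesis by (simp add: power_divide)
qed

lemma aux_pow: "(S^2 * (dd * y^2)) / g^4 = dd * (y * S / g^2)^2" for S dd y g :: rat
  by (simp add: power_mult_distrib power_divide flip: power_mult)

definition stp :: "int \<times> int \<times> rat \<Rightarrow> int \<times> int \<times> rat" where
  "stp s = (case s of (p, q, y) \<Rightarrow>
     (Nh p q div gcd (Nh p q) (Dh p q), Dh p q div gcd (Nh p q) (Dh p q),
      y * of_int (Sh p q) / (of_int (gcd (Nh p q) (Dh p q)))^2))"

definition hinv :: "int \<Rightarrow> int \<times> int \<times> rat \<Rightarrow> bool" where
  "hinv dd s = (case s of (p, q, y) \<Rightarrow> coprime p q \<and> of_int dd * y^2 = quarticF (of_int p) (of_int q))"

definition ht :: "int \<times> int \<times> rat \<Rightarrow> int" where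
  "ht s = (case s of (p, q, y) \<Rightarrow> max \<bar>p\<bar> \<bar>q\<bar>)"

lemma stp_props:
  assumes "hinv dd s"
  shows "hinv dd (stp s) \<and> ht s < ht (stp s)"
proof -
  obtain p q y where s: "s = (p, q, y)" by (cases s) auto
  have cop: "coprime p q" and eq: "of_int dd * y^2 = quarticF (of_int p) (of_int q)"
    using assms s unfolding hinv_def by auto
  define n where "n = Nh p q"
  define d where "d = Dh p q"
  define g where "g = gcd n d"
  have hg: "g * max \<bar>p\<bar> \<bar>q\<bar> < max \<bar>n\<bar> \<bar>d\<bar>" using hgrow[OF cop] unfolding n_def d_def g_def .
  have "0 \<le> g * max \<bar>p\<bar> \<bar>q\<bar>" unfolding g_def by simp
  then have nd: "n \<noteq> 0 \<or> d \<noteq> 0" using hg by auto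
  then have g0: "g \<noteq> 0" unfolding g_def by simp
  have gpos: "0 < g" using g0 unfolding g_def by (simp add: order_le_neq_trans)
  have cop2: "coprime (n div g) (d div g)" unfolding g_def by (rule div_gcd_coprime[OF nd])
  have gn: "g dvd n" and gd: "g dvd d" unfolding g_def by auto
  have st: "stp s = (n div g, d div g, y * of_int (Sh p q) / (of_int g)^2)"
    unfolding stp_def s n_def d_def g_def by simp
  have en: "(of_int (n div g) :: rat) = of_int n / of_int g" using gn by (simp add: of_int_div)
  have ed: "(of_int (d div g) :: rat) = of_int d / of_int g" using gd by (simp add: of_int_div)
  have A: "quarticF (of_int (n div g)) (of_int (d div g)) = quarticF (of_int n) (of_int d) / (of_int g)^4"
    unfolding en ed by (rule quarticF_scale)
  have B: "quarticF (of_int n) (of_int d) = (of_int (Sh p q))^2 * (of_int dd * y^2)"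
    unfolding n_def d_def of_int_Nh of_int_Dh of_int_Sh eq by (rule idF)
  have g0r: "(of_int g :: rat) \<noteq> 0" using g0 by simp
  have "quarticF (of_int (n div g)) (of_int (d div g)) = of_int dd * (y * of_int (Sh p q) / (of_int g)^2)^2"
    unfolding A B by (rule aux_pow)
  then have inv2: "hinv dd (stp s)" unfolding hinv_def st using cop2 by simp
  have "\<bar>n\<bar> = g * \<bar>n div g\<bar>" using gn gpos by (auto simp: abs_mult elim!: dvdE)
  moreover have "\<bar>d\<bar> = g * \<bar>d div g\<bar>" using gd gpos by (auto simp: abs_mult elim!: dvdE)
  ultimately have "max \<bar>n\<bar> \<bar>d\<bar> = g * max \<bar>n div g\<bar> \<bar>d div g\<bar>"
    using gpos by (simp add: max_mult_distrib_left)
  then have "max \<bar>p\<bar> \<bar>q\<bar> < max \<bar>n div g\<bar> \<bar>d div g\<bar>" using hg gpos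
    by (metis mult_less_cancel_left_pos)
  moreover have "ht (stp s) = max \<bar>n div g\<bar> \<bar>d div g\<bar>" unfolding st ht_def by simp
  moreover have "ht s = max \<bar>p\<bar> \<bar>q\<bar>" unfolding s ht_def by simp
  ultimately have "ht s < ht (stp s)" by simp
  with inv2 show ?thesis by simp
qed

lemma prim:
  fixes p q p' q' :: int and l :: rat
  assumes c1: "coprime p q" and c2: "coprime p' q'" and l: "l \<noteq> 0"
    and e1: "of_int p' = l * of_int p" and e2: "of_int q' = l * of_int q"
  shows "max \<bar>p'\<bar> \<bar>q'\<bar> = max \<bar>p\<bar> \<bar>q\<bar>"
proof -
  obtain a b where ab: "quotient_of l = (a, b)" by (cases "quotient_of l") auto
  have lab: "l = of_int a / of_int b" using quotient_of_div[OF ab] .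
  have b0: "b > 0" using quotient_of_denom_pos[OF ab] .
  have cab: "coprime a b" using quotient_of_coprime[OF ab] .
  have "of_int (b * p') = (of_int (a * p) :: rat)" using e1 b0 by (simp add: lab field_simps)
  then have bp: "b * p' = a * p" by (simp only: of_int_eq_iff)
  have "of_int (b * q') = (of_int (a * q) :: rat)" using e2 b0 by (simp add: lab field_simps)
  then have bq: "b * q' = a * q" by (simp only: of_int_eq_iff)
  have "b dvd a * p" using bp by (metis dvd_triv_left)
  then have "b dvd p" using cab by (simp add: coprime_commute coprime_dvd_mult_right_iff)
  moreover have "b dvd a * q" using bq by (metis dvd_triv_left)
  then have "b dvd q" using cab by (simp add: coprime_commute coprime_dvd_mult_right_iff)
  ultimately have "is_unit b" using c1 coprime_common_divisor by blast
  then have b1: "b = 1" using b0 by simp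
  then have pp: "p' = a * p" and qq: "q' = a * q" using bp bq by auto
  have "is_unit a" using c2 coprime_common_divisor[OF c2, of a] pp qq by simp
  then have "\<bar>a\<bar> = 1" by simp
  then show ?thesis using pp qq by (simp add: abs_mult)
qed

definition cls :: "int \<times> int \<times> rat \<Rightarrow> (rat \<times> rat \<times> rat) set" where
  "cls s = (case s of (p, q, y) \<Rightarrow> wproj_rel `` {(of_int p, y, of_int q)})"

lemma cls_mem:
  assumes "hinv dd s"
  shows "cls s \<in> H_rat_points dd"
proof -
  obtain p q y where s: "s = (p, q, y)" by (cases s) auto
  have cop: "coprime p q" and eq: "of_int dd * y^2 = quarticF (of_int p) (of_int q)"
    using assms s unfolding hinv_def by auto
  have "(p, q) \<noteq> (0, 0)" using cop by auto
  then have "(of_int p, y, of_int q) \<in> H_cone dd" unfolding H_cone_def using eq by auto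
  then show ?thesis unfolding H_rat_points_def cls_def s by (auto intro: quotientI)
qed

lemma cls_inj:
  assumes "hinv dd s" "hinv dd s'" "cls s = cls s'"
  shows "ht s = ht s'"
proof -
  obtain p q y where s: "s = (p, q, y)" by (cases s) auto
  obtain p' q' y' where s': "s' = (p', q', y')" by (cases s') auto
  have c1: "coprime p q" using assms(1) s unfolding hinv_def by auto
  have c2: "coprime p' q'" using assms(2) s' unfolding hinv_def by auto
  have "((of_int p', y', of_int q'), (of_int p', y', of_int q')) \<in> wproj_rel"
    unfolding wproj_rel_def by (auto intro!: exI[of _ 1])
  then have "(of_int p', y', of_int q') \<in> cls s" using assms(3) unfolding cls_def s' by simp
  then have "((of_int p, y, of_int q), (of_int p', y', of_int q')) \<in> wproj_rel"
    unfolding cls_def s by simp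
  then obtain l :: rat where l: "l \<noteq> 0" "of_int p' = l * of_int p" "of_int q' = l * of_int q"
    unfolding wproj_rel_def by auto
  show ?thesis using prim[OF c1 c2 l] unfolding ht_def s s' by simp
qed

lemma start:
  assumes "squarefree dd" "H_rat_points dd \<noteq> {}"
  shows "\<exists>s. hinv dd s"
proof -
  obtain X Y Z where m: "(X, Y, Z) \<in> H_cone dd"
    using assms(2) unfolding H_rat_points_def by (auto elim!: quotientE)
  have eq: "of_int dd * Y^2 = quarticF X Z" and nz: "(X, Y, Z) \<noteq> (0, 0, 0)"
    using m unfolding H_cone_def by auto
  have dd0: "dd \<noteq> 0" using assms(1) by auto
  have XZ: "X \<noteq> 0 \<or> Z \<noteq> 0"
  proof (rule ccontr)
    assume "\<not> (X \<noteq> 0 \<or> Z \<noteq> 0)"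
    then have "X = 0" "Z = 0" by auto
    then have "Y \<noteq> 0" "of_int dd * Y^2 = 0" using nz eq by (auto simp: quarticF_def)
    then show False using dd0 by simp
  qed
  obtain a b where ab: "quotient_of X = (a, b)" by (cases "quotient_of X") auto
  obtain c e where ce: "quotient_of Z = (c, e)" by (cases "quotient_of Z") auto
  have Xab: "X = of_int a / of_int b" using quotient_of_div[OF ab] .
  have Zce: "Z = of_int c / of_int e" using quotient_of_div[OF ce] .
  have b0: "b > 0" using quotient_of_denom_pos[OF ab] .
  have e0: "e > 0" using quotient_of_denom_pos[OF ce] .
  define u where "u = a * e"
  define v where "v = c * b"
  define m where "m = b * e"
  have um: "of_int u = of_int m * X" unfolding u_def m_def Xab using b0 by (simp add: field_simps)
  have vm: "of_int v = of_int m * Z" unfolding v_def m_def Zce using e0 by (simp add: field_simps)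
  have m0: "m \<noteq> 0" unfolding m_def using b0 e0 by simp
  have uv: "u \<noteq> 0 \<or> v \<noteq> 0"
  proof (rule ccontr)
    assume "\<not> (u \<noteq> 0 \<or> v \<noteq> 0)"
    then have "(of_int m :: rat) * X = 0" "(of_int m :: rat) * Z = 0" using um vm by auto
    then show False using XZ m0 by auto
  qed
  define g where "g = gcd u v"
  have g0: "g \<noteq> 0" unfolding g_def using uv by simp
  define p where "p = u div g"
  define q where "q = v div g"
  have cop: "coprime p q" unfolding p_def q_def g_def by (rule div_gcd_coprime[OF uv])
  define l :: rat where "l = of_int m / of_int g"
  have "(of_int p :: rat) = of_int u / of_int g" unfolding p_def g_def by (rule of_int_div) simp
  also have "\<dots> = l * X" unfolding l_def um using g0 by simp
  finally have pl: "of_int p = l * X" .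
  have "(of_int q :: rat) = of_int v / of_int g" unfolding q_def g_def by (rule of_int_div) simp
  also have "\<dots> = l * Z" unfolding l_def vm using g0 by simp
  finally have ql: "of_int q = l * Z" .
  have "of_int dd * (l^2 * Y)^2 = l^4 * (of_int dd * Y^2)" by algebra
  also have "\<dots> = quarticF (of_int p) (of_int q)" unfolding eq pl ql quarticF_mult ..
  finally have "hinv dd (p, q, l^2 * Y)" unfolding hinv_def using cop by simp
  then show ?thesis by blast
qed

theorem mainTheorem9:
  fixes d :: int
  assumes "squarefree d"
    and "H_rat_points d \<noteq> {}"
  shows "infinite (H_rat_points d)"
proof -
  obtain s0 where s0: "hinv d s0" using start[OF assms] by blast
  define sq where "sq n = (stp ^^ n) s0" for n
  have sqS: "sq (Suc n) = stp (sq n)" for n unfolding sq_def by simp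
  have invs: "hinv d (sq n)" for n
  proof (induction n)
    case 0 show ?case using s0 unfolding sq_def by simp
  next
    case (Suc n) then show ?case unfolding sqS using stp_props by blast
  qed
  have "ht (sq n) < ht (sq (Suc n))" for n
    unfolding sqS using stp_props[OF invs[of n]] by blast
  then have sm: "strict_mono (ht \<circ> sq)" by (simp add: strict_mono_Suc_iff)
  have "inj (cls \<circ> sq)"
  proof (rule injI)
    fix i j assume "(cls \<circ> sq) i = (cls \<circ> sq) j"
    then have "(ht \<circ> sq) i = (ht \<circ> sq) j" using cls_inj[OF invs[of i] invs[of j]] by simp
    then show "i = j" using strict_mono_eq[OF sm] by blast
  qed
  then have "infinite (range (cls \<circ> sq))" using finite_imageD[of "cls \<circ> sq" UNIV] by auto
  moreover have "range (cls \<circ> sq) \<subseteq> H_rat_points d" using cls_mem[OF invs] by auto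
  ultimately show ?thesis using finite_subset by blast
qed

end
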